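(* Let $(\alpha,\beta)$ be an admissible, non-null pair and assume there is no $x\in(0,1)$ with $\pi_x(\alpha)=\pi_x(\beta)$. Then for every $a\in(1,2]$ there is a $p$ with $1-1/a\le p\le 1/a$ such that $f_{(a,p,+)}(\pi_{1/a}(\omega))=\pi_{1/a}(S\omega)$ for all $\omega\in\Omega_{(\alpha,\beta,+)}$ and $f_{(a,p,-)}(\pi_{1/a}(\omega))=\pi_{1/a}(S\omega)$ for all $\omega\in\Omega_{(\alpha,\beta,-)}$.
   Context: For $1<a\le2$, $1-\frac1a\le p\le\frac1a$: $f_{(a,p,-)}(x)=ax$ if $x\le p$, $ax+(1-a)$ if $x>p$; $f_{(a,p,+)}(x)=ax$ if $x<p$, $ax+(1-a)$ if $x\ge p$. $\Omega=\{0,1\}^\infty$ (infinite binary strings $\omega_0\omega_1\cdots$), $S$ the left shift, $\preceq$ the lexicographic order with intervals $[\alpha,\beta]=\{\omega:\alpha\preceq\omega\preceq\beta\}$ and half-open analogues. $(\alpha,\beta)$ is admissible if $\alpha_0=0,\alpha_1=1,\beta_0=1,\beta_1=0$ and $S^n\alpha\notin(\alpha,\beta]$, $S^n\beta\notin[\alpha,\beta)$ for all $n\ge0$. $\Omega_{(\alpha,\beta,-)}=\{\omega:S^n\omega\notin(\alpha,\beta]\ \forall n\ge0\}$, $\Omega_{(\alpha,\beta,+)}=\{\omega:S^n\omega\notin[\alpha,\beta)\ \forall n\ge0\}$, $\Omega_{(\alpha,\beta)}$ their union. With $\Gamma_n=\{\omega_0\cdots\omega_n:\omega\in\Gamma\}$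 and $h(\Gamma)=\limsup_n\frac1n\ln|\Gamma_n|$, the pair is non-null if $h(\Omega_{(\alpha,\beta)})>0$. Projection: $\pi_x(\omega)=(1-x)\sum_{k\ge0}\omega_kx^k$ for $x\in[0,1)$. *)

theory Defs
  imports "HOL-Analysis.Analysis" "HOL-Library.Liminf_Limsup"
begin

(* Infinite binary strings: omega :: nat => bool, with True standing for 1, False for 0 *)
type_synonym bstr = "nat \<Rightarrow> bool"

definition bit :: "bool \<Rightarrow> real" where
  "bit b = (if b then 1 else 0)"

definition shift :: "bstr \<Rightarrow> bstr" where
  "shift \<omega> = (\<lambda>k. \<omega> (Suc k))"

definition lex_less :: "bstr \<Rightarrow> bstr \<Rightarrow> bool" where
  "lex_less \<omega> \<eta> \<longleftrightarrow> (\<exists>n. (\<forall>k<n. \<omega> k = \<eta> k) \<and> \<not> \<omega> n \<and> \<eta> n)"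

definition lex_le :: "bstr \<Rightarrow> bstr \<Rightarrow> bool" where
  "lex_le \<omega> \<eta> \<longleftrightarrow> lex_less \<omega> \<eta> \<or> \<omega> = \<eta>"

definition admissible :: "bstr \<Rightarrow> bstr \<Rightarrow> bool" where
  "admissible \<alpha> \<beta> \<longleftrightarrow>
     \<not> \<alpha> 0 \<and> \<alpha> 1 \<and> \<beta> 0 \<and> \<not> \<beta> 1 \<and>
     (\<forall>n. \<not> (lex_less \<alpha> ((shift ^^ n) \<alpha>) \<and> lex_le ((shift ^^ n) \<alpha>) \<beta>)) \<and>
     (\<forall>n. \<not> (lex_le \<alpha> ((shift ^^ n) \<beta>) \<and> lex_less ((shift ^^ n) \<beta>) \<beta>))"

definition Omega_minus :: "bstr \<Rightarrow> bstr \<Rightarrow> bstr set" where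
  "Omega_minus \<alpha> \<beta> = {\<omega>. \<forall>n. \<not> (lex_less \<alpha> ((shift ^^ n) \<omega>) \<and> lex_le ((shift ^^ n) \<omega>) \<beta>)}"

definition Omega_plus :: "bstr \<Rightarrow> bstr \<Rightarrow> bstr set" where
  "Omega_plus \<alpha> \<beta> = {\<omega>. \<forall>n. \<not> (lex_le \<alpha> ((shift ^^ n) \<omega>) \<and> lex_less ((shift ^^ n) \<omega>) \<beta>)}"

definition Omega_ab :: "bstr \<Rightarrow> bstr \<Rightarrow> bstr set" where
  "Omega_ab \<alpha> \<beta> = Omega_minus \<alpha> \<beta> \<union> Omega_plus \<alpha> \<beta>"

definition words :: "bstr set \<Rightarrow> nat \<Rightarrow> bool list set" where
  "words \<Gamma> n = (\<lambda>\<omega>. map \<omega> [0..<Suc n]) ` \<Gamma>"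

definition entropy :: "bstr set \<Rightarrow> ereal" where
  "entropy \<Gamma> = limsup (\<lambda>n. ereal (ln (real (card (words \<Gamma> n))) / real n))"

definition non_null :: "bstr \<Rightarrow> bstr \<Rightarrow> bool" where
  "non_null \<alpha> \<beta> \<longleftrightarrow> entropy (Omega_ab \<alpha> \<beta>) > 0"

definition proj :: "real \<Rightarrow> bstr \<Rightarrow> real" where
  "proj x \<omega> = (1 - x) * (\<Sum>k. bit (\<omega> k) * x ^ k)"

definition f_minus :: "real \<Rightarrow> real \<Rightarrow> real \<Rightarrow> real" where
  "f_minus a p x = (if x \<le> p then a * x else a * x + (1 - a))"

definition f_plus :: "real \<Rightarrow> real \<Rightarrow> real \<Rightarrow> real" where
  "f_plus a p x = (if x < p then a * x else a * x + (1 - a))"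

end

theory Submission
  imports Defs
begin

definition PS :: "bstr \<Rightarrow> real \<Rightarrow> real" where
  "PS \<omega> y = (\<Sum>k. bit (\<omega> k) * y ^ k)"

lemma bit_ge0[simp]: "0 \<le> bit b" and bit_le1[simp]: "bit b \<le> 1"
  by (auto simp: bit_def)

lemma summable_PS: assumes "0 \<le> y" "y < 1" shows "summable (\<lambda>k. bit (\<omega> k) * y ^ k)"
proof (rule summable_comparison_test')
  show "summable (\<lambda>k. y ^ k)" using assms by (simp add: summable_geometric)
  show "norm (bit (\<omega> n) * y ^ n) \<le> y ^ n" for n
    using assms by (auto simp: bit_def)
qed

lemma PS_bounds: assumes "0 \<le> y" "y < 1" shows "0 \<le> PS \<omega> y" "PS \<omega> y \<le> 1 / (1 - y)"
proof -
  show "0 \<le> PS \<omega> y" unfolding PS_def using summable_PS[OF assms] assms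
    by (intro suminf_nonneg) auto
  have "PS \<omega> y \<le> (\<Sum>k. y ^ k)" unfolding PS_def
    using summable_PS[OF assms] assms
    by (intro suminf_le) (auto simp: bit_def summable_geometric)
  also have "\<dots> = 1 / (1 - y)" using assms by (simp add: suminf_geometric)
  finally show "PS \<omega> y \<le> 1 / (1 - y)" .
qed

lemma shift_pow: "(shift ^^ n) \<omega> = (\<lambda>k. \<omega> (k + n))"
  by (induction n) (auto simp: shift_def)

lemma PS_split: assumes "0 \<le> y" "y < 1"
  shows "PS \<omega> y = (\<Sum>k<n. bit (\<omega> k) * y ^ k) + y ^ n * PS ((shift ^^ n) \<omega>) y"
proof -
  have "PS \<omega> y = (\<Sum>k. bit (\<omega> (k + n)) * y ^ (k + n)) + (\<Sum>k<n. bit (\<omega> k) * y ^ k)"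
    unfolding PS_def using suminf_split_initial_segment[OF summable_PS[OF assms, of \<omega>], where k=n] by simp
  also have "(\<Sum>k. bit (\<omega> (k + n)) * y ^ (k + n)) = (\<Sum>k. y ^ n * (bit (\<omega> (k + n)) * y ^ k))"
    by (simp add: power_add mult_ac)
  also have "\<dots> = y ^ n * PS ((shift ^^ n) \<omega>) y"
    unfolding PS_def shift_pow
    by (rule suminf_mult) (rule summable_PS[OF assms, of "\<lambda>k. \<omega> (k + n)"])
  finally show ?thesis by simp
qed

lemma PS_lex: assumes "0 \<le> y" "y < 1" "\<forall>k<n. u k = v k"
  shows "PS v y - PS u y = y ^ n * (PS ((shift ^^ n) v) y - PS ((shift ^^ n) u) y)"
proof -
  have "(\<Sum>k<n. bit (u k) * y ^ k) = (\<Sum>k<n. bit (v k) * y ^ k)"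
    using assms(3) by (intro sum.cong) auto
  then show ?thesis using PS_split[OF assms(1,2), of u n] PS_split[OF assms(1,2), of v n]
    by (simp add: algebra_simps)
qed

lemma PS_0: "PS \<omega> 0 = bit (\<omega> 0)"
proof -
  have "(\<lambda>k. bit (\<omega> k) * 0 ^ k) = (\<lambda>k. if k = 0 then bit (\<omega> 0) else (0::real))"
    by (auto simp: power_0_left)
  then show ?thesis unfolding PS_def using sums_single[of 0 "\<lambda>_. bit (\<omega> 0)"]
    by (simp add: sums_iff)
qed

lemma pow_diff_bound:
  fixes y z r :: real
  assumes "0 \<le> y" "0 \<le> z" "y \<le> r" "z \<le> r"
  shows "\<bar>y ^ k - z ^ k\<bar> \<le> \<bar>y - z\<bar> * (real k * r ^ (k - 1))"
proof -
  have "y ^ k - z ^ k = (y - z) * (\<Sum>i<k. z ^ (k - Suc i) * y ^ i)"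
    by (rule power_diff_sumr2)
  moreover have "(\<Sum>i<k. z ^ (k - Suc i) * y ^ i) \<le> (\<Sum>i<k. r ^ (k - 1))"
  proof (intro sum_mono)
    fix i assume "i \<in> {..<k}"
    then have "z ^ (k - Suc i) * y ^ i \<le> r ^ (k - Suc i) * r ^ i"
      using assms by (intro mult_mono power_mono) auto
    also have "\<dots> = r ^ (k - 1)" using \<open>i \<in> {..<k}\<close> by (simp add: power_add[symmetric])
    finally show "z ^ (k - Suc i) * y ^ i \<le> r ^ (k - 1)" .
  qed
  moreover have "0 \<le> (\<Sum>i<k. z ^ (k - Suc i) * y ^ i)" using assms by (intro sum_nonneg) auto
  ultimately show ?thesis by (simp add: abs_mult mult_left_mono)
qed

definition LC :: "real \<Rightarrow> real" where "LC r = (\<Sum>k. real k * r ^ (k - 1))"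

lemma summable_LC: assumes "0 \<le> r" "r < 1" shows "summable (\<lambda>k. real k * r ^ (k - 1))"
proof -
  have "summable (\<lambda>n. diffs (\<lambda>_. 1::real) n * r ^ n)"
    by (rule termdiff_converges[of r 1]) (use assms in \<open>auto simp: summable_geometric\<close>)
  then have "summable (\<lambda>n. real (n + 1) * r ^ (n + 1 - 1))" by (simp add: diffs_def)
  then show ?thesis by (subst summable_iff_shift[symmetric, of _ 1]) simp
qed

lemma PS_lip: assumes "0 \<le> y" "0 \<le> z" "y \<le> r" "z \<le> r" "r < 1"
  shows "\<bar>PS \<omega> y - PS \<omega> z\<bar> \<le> \<bar>y - z\<bar> * LC r"
proof -
  have y1: "y < 1" "z < 1" using assms by auto
  have s: "summable (\<lambda>k. bit (\<omega> k) * y ^ k - bit (\<omega> k) * z ^ k)"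
    using summable_PS[OF assms(1) y1(1)] summable_PS[OF assms(2) y1(2)] by (rule summable_diff)
  have sL: "summable (\<lambda>k. \<bar>y - z\<bar> * (real k * r ^ (k - 1)))"
    using summable_LC[of r] assms by (intro summable_mult) auto
  have b: "\<bar>bit (\<omega> k) * y ^ k - bit (\<omega> k) * z ^ k\<bar> \<le> \<bar>y - z\<bar> * (real k * r ^ (k - 1))" for k
  proof -
    have "\<bar>bit (\<omega> k) * y ^ k - bit (\<omega> k) * z ^ k\<bar> = bit (\<omega> k) * \<bar>y ^ k - z ^ k\<bar>"
      by (simp add: right_diff_distrib[symmetric] abs_mult)
    also have "\<dots> \<le> \<bar>y ^ k - z ^ k\<bar>" by (simp add: mult_left_le_one_le)
    also have "\<dots> \<le> \<bar>y - z\<bar> * (real k * r ^ (k - 1))" by (rule pow_diff_bound) (use assms in auto)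
    finally show ?thesis .
  qed
  have sa: "summable (\<lambda>k. \<bar>bit (\<omega> k) * y ^ k - bit (\<omega> k) * z ^ k\<bar>)"
    by (rule summable_comparison_test'[OF sL]) (use b in auto)
  have "PS \<omega> y - PS \<omega> z = (\<Sum>k. bit (\<omega> k) * y ^ k - bit (\<omega> k) * z ^ k)"
    unfolding PS_def
    using summable_PS[OF assms(1) y1(1)] summable_PS[OF assms(2) y1(2)] by (rule suminf_diff)
  then have "\<bar>PS \<omega> y - PS \<omega> z\<bar> \<le> (\<Sum>k. \<bar>bit (\<omega> k) * y ^ k - bit (\<omega> k) * z ^ k\<bar>)"
    using summable_rabs[OF sa] by simp
  also have "\<dots> \<le> (\<Sum>k. \<bar>y - z\<bar> * (real k * r ^ (k - 1)))"
    by (rule suminf_le[OF b sa sL])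
  also have "\<dots> = \<bar>y - z\<bar> * LC r" unfolding LC_def
    by (rule suminf_mult) (use summable_LC assms in auto)
  finally show ?thesis .
qed

lemma LC_nonneg: "0 \<le> r \<Longrightarrow> r < 1 \<Longrightarrow> 0 \<le> LC r"
  unfolding LC_def by (intro suminf_nonneg summable_LC) auto


lemma lex_tri: assumes "u \<noteq> v" shows "lex_less u v \<or> lex_less v u"
proof -
  obtain m where "u m \<noteq> v m" using assms by blast
  define n where "n = (LEAST n. u n \<noteq> v n)"
  have n1: "u n \<noteq> v n" unfolding n_def by (rule LeastI[of _ m]) fact
  have n2: "\<forall>k<n. u k = v k" unfolding n_def using not_less_Least by blast
  show ?thesis
  proof (cases "u n")
    case True then show ?thesis using n1 n2 unfolding lex_less_def by (metis)
  next
    case False then show ?thesis using n1 n2 unfolding lex_less_def by (metis)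
  qed
qed

lemma lex_less_irrefl: "\<not> lex_less u u" unfolding lex_less_def by auto

lemma lex_less_0: "\<not> u 0 \<Longrightarrow> v 0 \<Longrightarrow> lex_less u v"
  unfolding lex_less_def by (intro exI[of _ 0]) auto

lemma Omega_minus_shift: "\<omega> \<in> Omega_minus \<alpha> \<beta> \<Longrightarrow> (shift ^^ n) \<omega> \<in> Omega_minus \<alpha> \<beta>"
proof -
  have e: "(shift ^^ m) ((shift ^^ n) \<omega>) = (shift ^^ (m + n)) \<omega>" for m
    by (simp add: funpow_add)
  assume "\<omega> \<in> Omega_minus \<alpha> \<beta>"
  then show ?thesis unfolding Omega_minus_def by (simp add: e)
qed

lemma Omega_plus_shift: "\<omega> \<in> Omega_plus \<alpha> \<beta> \<Longrightarrow> (shift ^^ n) \<omega> \<in> Omega_plus \<alpha> \<beta>"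
proof -
  have e: "(shift ^^ m) ((shift ^^ n) \<omega>) = (shift ^^ (m + n)) \<omega>" for m
    by (simp add: funpow_add)
  assume "\<omega> \<in> Omega_plus \<alpha> \<beta>"
  then show ?thesis unfolding Omega_plus_def by (simp add: e)
qed

lemma Omega_ab_shift: "\<omega> \<in> Omega_ab \<alpha> \<beta> \<Longrightarrow> (shift ^^ n) \<omega> \<in> Omega_ab \<alpha> \<beta>"
  unfolding Omega_ab_def using Omega_minus_shift Omega_plus_shift by blast

lemma alpha_in: "admissible \<alpha> \<beta> \<Longrightarrow> \<alpha> \<in> Omega_minus \<alpha> \<beta>"
  unfolding admissible_def Omega_minus_def by auto

lemma beta_in: "admissible \<alpha> \<beta> \<Longrightarrow> \<beta> \<in> Omega_plus \<alpha> \<beta>"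
  unfolding admissible_def Omega_plus_def by auto

lemma A_minus: assumes "admissible \<alpha> \<beta>" "u \<in> Omega_minus \<alpha> \<beta>" "\<not> u 0"
  shows "u = \<alpha> \<or> lex_less u \<alpha>"
proof -
  have "lex_less u \<beta>" using assms unfolding admissible_def by (intro lex_less_0) auto
  moreover have "\<not> (lex_less \<alpha> ((shift ^^ 0) u) \<and> lex_le ((shift ^^ 0) u) \<beta>)"
    using assms(2) unfolding Omega_minus_def by blast
  ultimately have "\<not> lex_less \<alpha> u" unfolding lex_le_def by simp
  then show ?thesis using lex_tri by blast
qed

lemma A_plus: assumes "admissible \<alpha> \<beta>" "u \<in> Omega_plus \<alpha> \<beta>" "\<not> u 0"
  shows "lex_less u \<alpha>"
proof -
  have "lex_less u \<beta>" using assms unfolding admissible_def by (intro lex_less_0) auto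
  moreover have "\<not> (lex_le \<alpha> ((shift ^^ 0) u) \<and> lex_less ((shift ^^ 0) u) \<beta>)"
    using assms(2) unfolding Omega_plus_def by blast
  ultimately have "\<not> lex_le \<alpha> u" by simp
  then show ?thesis using lex_tri unfolding lex_le_def by blast
qed

lemma B_minus: assumes "admissible \<alpha> \<beta>" "v \<in> Omega_minus \<alpha> \<beta>" "v 0"
  shows "lex_less \<beta> v"
proof -
  have "lex_less \<alpha> v" using assms unfolding admissible_def by (intro lex_less_0) auto
  moreover have "\<not> (lex_less \<alpha> ((shift ^^ 0) v) \<and> lex_le ((shift ^^ 0) v) \<beta>)"
    using assms(2) unfolding Omega_minus_def by blast
  ultimately have "\<not> lex_le v \<beta>" by simp
  then show ?thesis using lex_tri unfolding lex_le_def by blast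
qed

lemma B_plus: assumes "admissible \<alpha> \<beta>" "v \<in> Omega_plus \<alpha> \<beta>" "v 0"
  shows "v = \<beta> \<or> lex_less \<beta> v"
proof -
  have "lex_less \<alpha> v" using assms unfolding admissible_def by (intro lex_less_0) auto
  moreover have "\<not> (lex_le \<alpha> ((shift ^^ 0) v) \<and> lex_less ((shift ^^ 0) v) \<beta>)"
    using assms(2) unfolding Omega_plus_def by blast
  ultimately have "\<not> lex_less v \<beta>" unfolding lex_le_def by simp
  then show ?thesis using lex_tri by blast
qed

lemma A_ab: "admissible \<alpha> \<beta> \<Longrightarrow> u \<in> Omega_ab \<alpha> \<beta> \<Longrightarrow> \<not> u 0 \<Longrightarrow> u = \<alpha> \<or> lex_less u \<alpha>"
  unfolding Omega_ab_def using A_minus A_plus by blast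

lemma B_ab: "admissible \<alpha> \<beta> \<Longrightarrow> v \<in> Omega_ab \<alpha> \<beta> \<Longrightarrow> v 0 \<Longrightarrow> v = \<beta> \<or> lex_less \<beta> v"
  unfolding Omega_ab_def using B_minus B_plus by blast

definition Good :: "bstr \<Rightarrow> bstr \<Rightarrow> real \<Rightarrow> bool" where
  "Good \<alpha> \<beta> y \<longleftrightarrow> (\<forall>u\<in>Omega_ab \<alpha> \<beta>. \<forall>v\<in>Omega_ab \<alpha> \<beta>. \<not> u 0 \<longrightarrow> v 0 \<longrightarrow> PS u y \<le> PS v y)"

lemma alpha_ab: "admissible \<alpha> \<beta> \<Longrightarrow> (shift ^^ n) \<alpha> \<in> Omega_ab \<alpha> \<beta>"
  unfolding Omega_ab_def using alpha_in Omega_minus_shift by blast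

lemma beta_ab: "admissible \<alpha> \<beta> \<Longrightarrow> (shift ^^ n) \<beta> \<in> Omega_ab \<alpha> \<beta>"
  unfolding Omega_ab_def using beta_in Omega_plus_shift by blast

lemma A_le: assumes "admissible \<alpha> \<beta>" "0 \<le> y" "y < 1" "Good \<alpha> \<beta> y"
  "u \<in> Omega_ab \<alpha> \<beta>" "\<not> u 0"
  shows "PS u y \<le> PS \<alpha> y"
proof -
  consider "u = \<alpha>" | "lex_less u \<alpha>" using A_ab assms by blast
  then show ?thesis
  proof cases
    case 2
    then obtain n where n: "\<forall>k<n. u k = \<alpha> k" "\<not> u n" "\<alpha> n" unfolding lex_less_def by blast
    have "PS ((shift ^^ n) u) y \<le> PS ((shift ^^ n) \<alpha>) y"
      using assms(4) Omega_ab_shift[OF assms(5)] alpha_ab[OF assms(1)] n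
      unfolding Good_def by (simp add: shift_pow)
    then show ?thesis using PS_lex[OF assms(2,3) n(1)] assms(2)
      by (smt (verit) mult_nonneg_nonneg zero_le_power)
  qed simp
qed

lemma B_ge: assumes "admissible \<alpha> \<beta>" "0 \<le> y" "y < 1" "Good \<alpha> \<beta> y"
  "v \<in> Omega_ab \<alpha> \<beta>" "v 0"
  shows "PS \<beta> y \<le> PS v y"
proof -
  consider "v = \<beta>" | "lex_less \<beta> v" using B_ab assms by blast
  then show ?thesis
  proof cases
    case 2
    then obtain n where n: "\<forall>k<n. \<beta> k = v k" "\<not> \<beta> n" "v n" unfolding lex_less_def by blast
    have "PS ((shift ^^ n) \<beta>) y \<le> PS ((shift ^^ n) v) y"
      using assms(4) Omega_ab_shift[OF assms(5)] beta_ab[OF assms(1)] n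
      unfolding Good_def by (simp add: shift_pow)
    then show ?thesis using PS_lex[OF assms(2,3) n(1)] assms(2)
      by (smt (verit) mult_nonneg_nonneg zero_le_power)
  qed simp
qed

lemma step: assumes "admissible \<alpha> \<beta>" "0 \<le> y" "y < 1" "Good \<alpha> \<beta> y"
  "u \<in> Omega_ab \<alpha> \<beta>" "\<not> u 0" "v \<in> Omega_ab \<alpha> \<beta>" "v 0"
  shows "PS \<beta> y - PS \<alpha> y \<le> PS v y - PS u y"
  using A_le[OF assms(1-6)] B_ge[OF assms(1-4,7,8)] by simp

lemma ab_bits: "admissible \<alpha> \<beta> \<Longrightarrow> \<not> \<alpha> 0 \<and> \<beta> 0"
  unfolding admissible_def by auto


lemma good_small: assumes "0 \<le> y" "y \<le> 1/2" shows "Good \<alpha> \<beta> y"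
  unfolding Good_def
proof (intro ballI impI)
  fix u v :: bstr assume "\<not> u 0" "v 0"
  have y1: "y < 1" using assms by simp
  have "PS v y = bit (v 0) + y * PS (shift v) y" using PS_split[OF assms(1) y1, of v 1]
    by (simp add: shift_def)
  moreover have "PS u y = bit (u 0) + y * PS (shift u) y" using PS_split[OF assms(1) y1, of u 1]
    by (simp add: shift_def)
  moreover have "y * PS (shift u) y \<le> y * (1 / (1 - y))"
    using PS_bounds[OF assms(1) y1] assms by (intro mult_left_mono) auto
  moreover have "y * (1 / (1 - y)) \<le> 1" using assms by (simp add: field_simps)
  moreover have "0 \<le> y * PS (shift v) y" using PS_bounds[OF assms(1) y1] assms by simp
  ultimately show "PS u y \<le> PS v y" using \<open>\<not> u 0\<close> \<open>v 0\<close> by (simp add: bit_def)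
qed

lemma c_pos: assumes "admissible \<alpha> \<beta>" "0 \<le> y" "y < 1" "Good \<alpha> \<beta> y"
  "\<forall>z\<in>{0<..<1}. PS \<alpha> z \<noteq> PS \<beta> z"
  shows "PS \<alpha> y < PS \<beta> y"
proof (cases "y = 0")
  case True then show ?thesis using ab_bits[OF assms(1)] by (simp add: PS_0 bit_def)
next
  case False
  have "PS \<alpha> y \<le> PS \<beta> y" using assms(4) alpha_ab[OF assms(1), of 0] beta_ab[OF assms(1), of 0]
    ab_bits[OF assms(1)] unfolding Good_def by auto
  moreover have "PS \<alpha> y \<noteq> PS \<beta> y" using assms(5) False assms(2,3) by auto
  ultimately show ?thesis by simp
qed

lemma all_good: assumes adm: "admissible \<alpha> \<beta>"
  and H: "\<forall>z\<in>{0<..<1}. PS \<alpha> z \<noteq> PS \<beta> z"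
  and y: "0 \<le> y" "y < 1"
  shows "Good \<alpha> \<beta> y"
proof (rule ccontr)
  assume "\<not> Good \<alpha> \<beta> y"
  define Bad where "Bad = {y. 0 \<le> y \<and> y < 1 \<and> \<not> Good \<alpha> \<beta> y}"
  have yB: "y \<in> Bad" using y \<open>\<not> Good \<alpha> \<beta> y\<close> unfolding Bad_def by auto
  have bdd: "bdd_below Bad" unfolding Bad_def by (rule bdd_belowI[of _ 0]) auto
  define s where "s = Inf Bad"
  have s1: "s < 1" using cInf_lower[OF yB bdd] y unfolding s_def by simp
  have bhalf: "b > 1/2" if "b \<in> Bad" for b
    using that good_small[of b] unfolding Bad_def by force
  have s2: "s \<ge> 1/2" unfolding s_def using yB bhalf by (intro cInf_greatest) force+
  have below: "Good \<alpha> \<beta> t" if "0 \<le> t" "t < s" for t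
  proof (rule ccontr)
    assume "\<not> Good \<alpha> \<beta> t"
    then have "t \<in> Bad" using that s1 unfolding Bad_def by auto
    then show False using cInf_lower[OF _ bdd, of t] that unfolding s_def by simp
  qed
  define L where "L = LC s"
  have L0: "0 \<le> L" unfolding L_def using s1 s2 by (intro LC_nonneg) auto
  have gs: "Good \<alpha> \<beta> s"
    unfolding Good_def
  proof (intro ballI impI, rule ccontr)
    fix u v assume uv: "u \<in> Omega_ab \<alpha> \<beta>" "v \<in> Omega_ab \<alpha> \<beta>" "\<not> u 0" "v 0"
      "\<not> PS u s \<le> PS v s"
    define \<delta> where "\<delta> = PS u s - PS v s"
    have d0: "\<delta> > 0" using uv unfolding \<delta>_def by simp
    define t where "t = s - min (s/2) (\<delta> / (4 * (L + 1)))"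
    have t1: "0 \<le> t" "t < s" using s2 d0 L0 unfolding t_def by (auto simp: min_def)
    have "PS u t \<le> PS v t" using below[OF t1] uv unfolding Good_def by auto
    moreover have "\<bar>PS u s - PS u t\<bar> \<le> \<bar>s - t\<bar> * L" unfolding L_def
      by (rule PS_lip) (use t1 s1 in auto)
    moreover have "\<bar>PS v s - PS v t\<bar> \<le> \<bar>s - t\<bar> * L" unfolding L_def
      by (rule PS_lip) (use t1 s1 in auto)
    moreover have "\<bar>s - t\<bar> * L \<le> \<delta> / (4 * (L + 1)) * L"
      using t1 L0 unfolding t_def by (intro mult_right_mono) auto
    moreover have "\<delta> / (4 * (L + 1)) * L < \<delta> / 2"
      using d0 L0 by (simp add: field_simps add_pos_nonneg)
    ultimately show False using \<delta>_def by linarith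
  qed
  define c where "c = PS \<beta> s - PS \<alpha> s"
  have c0: "c > 0" unfolding c_def using c_pos[OF adm _ s1 gs H] s2 by simp
  define r where "r = (1 + s) / 2"
  define L' where "L' = LC r"
  have r1: "s < r" "r < 1" using s1 unfolding r_def by auto
  have L'0: "0 \<le> L'" unfolding L'_def using r1 s2 by (intro LC_nonneg) auto
  define \<epsilon> where "\<epsilon> = min ((1 - s) / 2) (c / (4 * (L' + 1)))"
  have e0: "\<epsilon> > 0" using s1 c0 L'0 unfolding \<epsilon>_def by auto
  obtain b where b: "b \<in> Bad" "b < s + \<epsilon>"
    using cInf_less_iff[of Bad "s + \<epsilon>"] yB bdd e0 unfolding s_def by auto
  have bs: "s \<le> b" using cInf_lower[OF b(1) bdd] unfolding s_def .
  have "\<epsilon> \<le> (1 - s) / 2" unfolding \<epsilon>_def by (rule min.cobounded1)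
  then have br: "b \<le> r" using b(2) unfolding r_def by (simp add: field_simps)
  have "\<not> Good \<alpha> \<beta> b" using b(1) unfolding Bad_def by auto
  then obtain u v where uv: "u \<in> Omega_ab \<alpha> \<beta>" "v \<in> Omega_ab \<alpha> \<beta>" "\<not> u 0" "v 0"
    "PS v b < PS u b" unfolding Good_def by auto
  have "c \<le> PS v s - PS u s" unfolding c_def by (rule step[OF adm _ s1 gs uv(1,3,2,4)]) (use s2 in auto)
  moreover have "\<bar>PS u s - PS u b\<bar> \<le> \<bar>s - b\<bar> * L'" unfolding L'_def
    by (rule PS_lip) (use bs br r1 s2 in auto)
  moreover have "\<bar>PS v s - PS v b\<bar> \<le> \<bar>s - b\<bar> * L'" unfolding L'_def
    by (rule PS_lip) (use bs br r1 s2 in auto)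
  moreover have "\<bar>s - b\<bar> * L' \<le> c / (4 * (L' + 1)) * L'"
    using bs b(2) L'0 unfolding \<epsilon>_def by (intro mult_right_mono) auto
  moreover have "c / (4 * (L' + 1)) * L' < c / 2"
    using c0 L'0 by (simp add: field_simps add_pos_nonneg)
  ultimately show False using uv(5) by linarith
qed


lemma lex_strict: assumes adm: "admissible \<alpha> \<beta>" and x: "0 < x" "x < 1" and g: "Good \<alpha> \<beta> x"
  and H: "\<forall>z\<in>{0<..<1}. PS \<alpha> z \<noteq> PS \<beta> z"
  and uv: "u \<in> Omega_ab \<alpha> \<beta>" "v \<in> Omega_ab \<alpha> \<beta>" "lex_less u v"
  shows "PS u x < PS v x"
proof -
  obtain n where n: "\<forall>k<n. u k = v k" "\<not> u n" "v n" using uv(3) unfolding lex_less_def by blast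
  have "PS \<beta> x - PS \<alpha> x \<le> PS ((shift ^^ n) v) x - PS ((shift ^^ n) u) x"
    by (rule step[OF adm _ x(2) g Omega_ab_shift[OF uv(1)] _ Omega_ab_shift[OF uv(2)]])
      (use x n in \<open>auto simp: shift_pow\<close>)
  moreover have "PS \<alpha> x < PS \<beta> x" using c_pos[OF adm _ x(2) g H] x by simp
  ultimately have "0 < PS ((shift ^^ n) v) x - PS ((shift ^^ n) u) x" by simp
  then have "0 < x ^ n * (PS ((shift ^^ n) v) x - PS ((shift ^^ n) u) x)" using x by simp
  then show ?thesis using PS_lex[OF _ x(2) n(1)] x by simp
qed

lemma proj_PS: "proj x \<omega> = (1 - x) * PS \<omega> x"
  unfolding proj_def PS_def ..

lemma PS_head: "0 \<le> x \<Longrightarrow> x < 1 \<Longrightarrow> PS \<omega> x = bit (\<omega> 0) + x * PS (shift \<omega>) x"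
  using PS_split[of x \<omega> 1] by (simp add: shift_def)

theorem lemma2:
  fixes \<alpha> \<beta> :: bstr
  assumes "admissible \<alpha> \<beta>"
    and "non_null \<alpha> \<beta>"
    and "\<not> (\<exists>x\<in>{0<..<1}. proj x \<alpha> = proj x \<beta>)"
  shows "\<forall>a::real. 1 < a \<and> a \<le> 2 \<longrightarrow>
           (\<exists>p. 1 - 1 / a \<le> p \<and> p \<le> 1 / a \<and>
              (\<forall>\<omega>\<in>Omega_plus \<alpha> \<beta>. f_plus a p (proj (1 / a) \<omega>) = proj (1 / a) (shift \<omega>)) \<and>
              (\<forall>\<omega>\<in>Omega_minus \<alpha> \<beta>. f_minus a p (proj (1 / a) \<omega>) = proj (1 / a) (shift \<omega>)))"
proof (intro allI impI)
  fix a :: real assume a: "1 < a \<and> a \<le> 2"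
  note adm = assms(1)
  define x where "x = 1 / a"
  have x: "0 < x" "x < 1" "1/2 \<le> x" using a unfolding x_def by (auto simp: field_simps)
  have H: "\<forall>z\<in>{0<..<1}. PS \<alpha> z \<noteq> PS \<beta> z" using assms(3) by (auto simp: proj_PS)
  have g: "Good \<alpha> \<beta> x" using all_good[OF adm H] x by simp
  have ab: "\<not> \<alpha> 0" "\<beta> 0" using ab_bits[OF adm] by auto
  have aab: "\<alpha> \<in> Omega_ab \<alpha> \<beta>" "\<beta> \<in> Omega_ab \<alpha> \<beta>" using alpha_ab[OF adm, of 0] beta_ab[OF adm, of 0] by auto
  have x1: "0 < 1 - x" using x by simp
  have shift_eq: "proj x (shift \<omega>) = a * proj x \<omega> + (1 - a) * bit (\<omega> 0)" for \<omega>
  proof -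
    have ax: "a * x = 1" using a unfolding x_def by simp
    have h: "PS \<omega> x = bit (\<omega> 0) + x * PS (shift \<omega>) x" using PS_head[of x \<omega>] x by simp
    have eq: "PS (shift \<omega>) x = a * (PS \<omega> x - bit (\<omega> 0))"
    proof -
      have "a * (PS \<omega> x - bit (\<omega> 0)) = (a * x) * PS (shift \<omega>) x" using h by (simp add: algebra_simps)
      then show ?thesis using ax by simp
    qed
    have "proj x (shift \<omega>) = a * ((1 - x) * PS \<omega> x) - (a - a * x) * bit (\<omega> 0)"
      unfolding proj_PS by (simp only: eq) (simp add: algebra_simps)
    then show ?thesis unfolding proj_PS using ax by (simp add: algebra_simps)
  qed
  have A1: "proj x u \<le> proj x \<alpha>" if "u \<in> Omega_ab \<alpha> \<beta>" "\<not> u 0" for u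
    using A_le[OF adm _ x(2) g that] x1 x unfolding proj_PS by (intro mult_left_mono) auto
  have A2: "proj x u < proj x \<alpha>" if "u \<in> Omega_plus \<alpha> \<beta>" "\<not> u 0" for u
  proof -
    have "u \<in> Omega_ab \<alpha> \<beta>" using that unfolding Omega_ab_def by auto
    then have "PS u x < PS \<alpha> x" using lex_strict[OF adm x(1,2) g H _ aab(1) A_plus[OF adm that]] by simp
    then show ?thesis using x1 unfolding proj_PS by simp
  qed
  have B1: "proj x \<beta> \<le> proj x v" if "v \<in> Omega_ab \<alpha> \<beta>" "v 0" for v
    using B_ge[OF adm _ x(2) g that] x1 x unfolding proj_PS by (intro mult_left_mono) auto
  have B2: "proj x \<beta> < proj x v" if "v \<in> Omega_minus \<alpha> \<beta>" "v 0" for v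
  proof -
    have "v \<in> Omega_ab \<alpha> \<beta>" using that unfolding Omega_ab_def by auto
    then have "PS \<beta> x < PS v x" using lex_strict[OF adm x(1,2) g H aab(2) _ B_minus[OF adm that]] by simp
    then show ?thesis using x1 unfolding proj_PS by simp
  qed
  have AB: "proj x \<alpha> < proj x \<beta>" using c_pos[OF adm _ x(2) g H] x x1 unfolding proj_PS by simp
  have B3: "1 - x \<le> proj x v" if "v 0" for v
  proof -
    have "0 \<le> x * PS (shift v) x" using PS_bounds[of x] x by simp
    then have "1 \<le> PS v x" using PS_head[of x v] x that by (simp add: bit_def)
    then show ?thesis unfolding proj_PS using x1 by (simp add: mult_le_cancel_left1)
  qed
  have A3: "proj x \<alpha> \<le> x"
  proof -
    have "x * PS (shift \<alpha>) x \<le> x * (1 / (1 - x))" using PS_bounds[of x] x by (intro mult_left_mono) auto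
    then have "(1 - x) * PS \<alpha> x \<le> (1 - x) * (x * (1 / (1 - x)))" using PS_head[of x \<alpha>] x ab x1
      by (intro mult_left_mono) (auto simp: bit_def)
    then show ?thesis unfolding proj_PS using x1 by simp
  qed
  define p where "p = max (proj x \<alpha>) (1 - x)"
  have bdy: "1 - 1 / a \<le> p" "p \<le> 1 / a" using A3 x unfolding p_def x_def[symmetric] by auto
  have "\<forall>\<omega>\<in>Omega_plus \<alpha> \<beta>. f_plus a p (proj x \<omega>) = proj x (shift \<omega>)"
  proof
    fix \<omega> assume w: "\<omega> \<in> Omega_plus \<alpha> \<beta>"
    then have wab: "\<omega> \<in> Omega_ab \<alpha> \<beta>" unfolding Omega_ab_def by auto
    show "f_plus a p (proj x \<omega>) = proj x (shift \<omega>)"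
    proof (cases "\<omega> 0")
      case True
      have "\<not> proj x \<omega> < p" using B1[OF wab True] B3[of \<omega>, OF True] AB unfolding p_def by auto
      then show ?thesis unfolding f_plus_def shift_eq using True by (simp add: bit_def)
    next
      case False
      have "proj x \<omega> < p" using A2[OF w False] unfolding p_def by auto
      then show ?thesis unfolding f_plus_def shift_eq using False by (simp add: bit_def)
    qed
  qed
  moreover have "\<forall>\<omega>\<in>Omega_minus \<alpha> \<beta>. f_minus a p (proj x \<omega>) = proj x (shift \<omega>)"
  proof
    fix \<omega> assume w: "\<omega> \<in> Omega_minus \<alpha> \<beta>"
    then have wab: "\<omega> \<in> Omega_ab \<alpha> \<beta>" unfolding Omega_ab_def by auto
    show "f_minus a p (proj x \<omega>) = proj x (shift \<omega>)"
    proof (cases "\<omega> 0")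
      case True
      have "\<not> proj x \<omega> \<le> p" using B2[OF w True] B1[OF aab(2) ab(2)] B3[of \<beta>, OF ab(2)] AB unfolding p_def by auto
      then show ?thesis unfolding f_minus_def shift_eq using True by (simp add: bit_def)
    next
      case False
      have "proj x \<omega> \<le> p" using A1[OF wab False] unfolding p_def by auto
      then show ?thesis unfolding f_minus_def shift_eq using False by (simp add: bit_def)
    qed
  qed
  ultimately show "\<exists>p. 1 - 1 / a \<le> p \<and> p \<le> 1 / a \<and>
              (\<forall>\<omega>\<in>Omega_plus \<alpha> \<beta>. f_plus a p (proj (1 / a) \<omega>) = proj (1 / a) (shift \<omega>)) \<and>
              (\<forall>\<omega>\<in>Omega_minus \<alpha> \<beta>. f_minus a p (proj (1 / a) \<omega>) = proj (1 / a) (shift \<omega>))"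
    using bdy unfolding x_def by blast
qed

end
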